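(* For all (not necessarily typable) terms $M,N_1,N_2$ of $\lambda^{\triangleright}$: if $M\to^*N_1$ and $M\to^*N_2$, then there exists $N$ such that $N_1\to^*N$ and $N_2\to^*N$.
   Context: Terms of $\lambda^{\triangleright}$: transition variables $\alpha,\beta,\dots$; a transition $A,B$ is a finite sequence of transition variables ($\varepsilon$ empty, $AB$ concatenation). Types $\tau ::= b \mid \tau\to\tau \mid \triangleright_\alpha\tau \mid \forall\alpha.\tau$. Terms $M ::= x \mid M\,M \mid \lambda x{:}\tau.M \mid \blacktriangleright_\alpha M \mid \blacktriangleleft_\alpha M \mid \Lambda\alpha.M \mid M\,A$ (quotation, unquotation, transition abstraction, instantiation by a transition); $x$ is bound in $\lambda x{:}\tau.M$ and $\alpha$ in $\Lambda\alpha.M$. For $A=\alpha_1\cdots\alpha_n$: $\blacktriangleright_A M=\blacktriangleright_{\alpha_1}\cdots\blacktriangleright_{\alpha_n}M$, $\blacktriangleleft_A M=\blacktriangleleft_{\alpha_n}\cdots\blacktriangleleft_{\alpha_1}M$ (identity when $A=\varepsilon$), and similarly $\triangleright_A\tau$. $M[x:=N]$ is capture-avoiding term substitution; $M[\alpha:=B]$ is capture-avoiding substitution of a transition $B$ for $\alpha$, replacing $\alpha$ by $B$ in transitions and $\triangleright_\alpha,\blacktriangleright_\alpha,\blacktriangleleft_\alpha$ by $\triangleright_B,\blacktriangleright_B,\blacktriangleleft_B$. Reduction $M\to N$ is the least relation closed under all term constructors (reduction anywhere, including under binders and quotations) containing $(\lambda x{:}\tau.M)\,N\to M[x:=N]$,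 $\blacktriangleleft_\alpha\blacktriangleright_\alpha M\to M$, $(\Lambda\alpha.M)\,A\to M[\alpha:=A]$; $\to^*$ is its reflexive-transitive closure. *)

theory Defs
  imports Main
begin

text \<open>Syntax of the untyped-term calculus lambda-triangle, with de Bruijn indices
 for both term variables and transition variables (so terms are identified up to
 alpha-conversion and substitution is capture-avoiding by construction).\<close>

type_synonym tvar = nat
type_synonym trans = "tvar list"

datatype 'b ty =
    TBase 'b
  | TArr "'b ty" "'b ty"
  | TQ tvar "'b ty"
  | TAll "'b ty"             \<comment> \<open>forall alpha. tau (binds index 0)\<close>

datatype 'b tm =
    Var nat
  | App "'b tm" "'b tm"
  | Lam "'b ty" "'b tm"      \<comment> \<open>binds term index 0\<close>
  | Quo tvar "'b tm"
  | Unq tvar "'b tm"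
  | TLam "'b tm"             \<comment> \<open>transition abstraction (binds transition index 0)\<close>
  | TApp "'b tm" trans

definition liftv :: "nat \<Rightarrow> nat \<Rightarrow> nat" where
  "liftv k i = (if i < k then i else Suc i)"

definition substv :: "nat \<Rightarrow> trans \<Rightarrow> tvar \<Rightarrow> trans" where
  "substv k B a = (if a = k then B else if a < k then [a] else [a - 1])"

fun tqs :: "trans \<Rightarrow> 'b ty \<Rightarrow> 'b ty" where
  "tqs [] t = t"
| "tqs (a # A) t = TQ a (tqs A t)"

fun quoteT :: "trans \<Rightarrow> 'b tm \<Rightarrow> 'b tm" where
  "quoteT [] M = M"
| "quoteT (a # A) M = Quo a (quoteT A M)"

fun unquoteT :: "trans \<Rightarrow> 'b tm \<Rightarrow> 'b tm" where
  "unquoteT [] M = M"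
| "unquoteT (a # A) M = unquoteT A (Unq a M)"

primrec liftTy :: "nat \<Rightarrow> 'b ty \<Rightarrow> 'b ty" where
  "liftTy k (TBase b) = TBase b"
| "liftTy k (TArr s t) = TArr (liftTy k s) (liftTy k t)"
| "liftTy k (TQ a t) = TQ (liftv k a) (liftTy k t)"
| "liftTy k (TAll t) = TAll (liftTy (Suc k) t)"

primrec substTy :: "nat \<Rightarrow> trans \<Rightarrow> 'b ty \<Rightarrow> 'b ty" where
  "substTy k B (TBase b) = TBase b"
| "substTy k B (TArr s t) = TArr (substTy k B s) (substTy k B t)"
| "substTy k B (TQ a t) = tqs (substv k B a) (substTy k B t)"
| "substTy k B (TAll t) = TAll (substTy (Suc k) (map (liftv 0) B) t)"

primrec liftM :: "nat \<Rightarrow> 'b tm \<Rightarrow> 'b tm" where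
  "liftM k (Var i) = Var (liftv k i)"
| "liftM k (App M N) = App (liftM k M) (liftM k N)"
| "liftM k (Lam t M) = Lam t (liftM (Suc k) M)"
| "liftM k (Quo a M) = Quo a (liftM k M)"
| "liftM k (Unq a M) = Unq a (liftM k M)"
| "liftM k (TLam M) = TLam (liftM k M)"
| "liftM k (TApp M A) = TApp (liftM k M) A"

primrec liftTM :: "nat \<Rightarrow> 'b tm \<Rightarrow> 'b tm" where
  "liftTM k (Var i) = Var i"
| "liftTM k (App M N) = App (liftTM k M) (liftTM k N)"
| "liftTM k (Lam t M) = Lam (liftTy k t) (liftTM k M)"
| "liftTM k (Quo a M) = Quo (liftv k a) (liftTM k M)"
| "liftTM k (Unq a M) = Unq (liftv k a) (liftTM k M)"
| "liftTM k (TLam M) = TLam (liftTM (Suc k) M)"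
| "liftTM k (TApp M A) = TApp (liftTM k M) (map (liftv k) A)"

primrec subst :: "nat \<Rightarrow> 'b tm \<Rightarrow> 'b tm \<Rightarrow> 'b tm" where
  "subst k N (Var i) = (if i = k then N else if i < k then Var i else Var (i - 1))"
| "subst k N (App M1 M2) = App (subst k N M1) (subst k N M2)"
| "subst k N (Lam t M) = Lam t (subst (Suc k) (liftM 0 N) M)"
| "subst k N (Quo a M) = Quo a (subst k N M)"
| "subst k N (Unq a M) = Unq a (subst k N M)"
| "subst k N (TLam M) = TLam (subst k (liftTM 0 N) M)"
| "subst k N (TApp M A) = TApp (subst k N M) A"

primrec substTM :: "nat \<Rightarrow> trans \<Rightarrow> 'b tm \<Rightarrow> 'b tm" where
  "substTM k B (Var i) = Var i"
| "substTM k B (App M N) = App (substTM k B M) (substTM k B N)"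
| "substTM k B (Lam t M) = Lam (substTy k B t) (substTM k B M)"
| "substTM k B (Quo a M) = quoteT (substv k B a) (substTM k B M)"
| "substTM k B (Unq a M) = unquoteT (substv k B a) (substTM k B M)"
| "substTM k B (TLam M) = TLam (substTM (Suc k) (map (liftv 0) B) M)"
| "substTM k B (TApp M A) = TApp (substTM k B M) (concat (map (substv k B) A))"

inductive red :: "'b tm \<Rightarrow> 'b tm \<Rightarrow> bool" (infix "\<rightarrow>\<^sub>t" 50) where
  beta:   "App (Lam t M) N \<rightarrow>\<^sub>t subst 0 N M"
| quo:    "Unq a (Quo a M) \<rightarrow>\<^sub>t M"
| tbeta:  "TApp (TLam M) A \<rightarrow>\<^sub>t substTM 0 A M"
| appL:   "M \<rightarrow>\<^sub>t M' \<Longrightarrow> App M N \<rightarrow>\<^sub>t App M' N"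
| appR:   "N \<rightarrow>\<^sub>t N' \<Longrightarrow> App M N \<rightarrow>\<^sub>t App M N'"
| lam:    "M \<rightarrow>\<^sub>t M' \<Longrightarrow> Lam t M \<rightarrow>\<^sub>t Lam t M'"
| quoC:   "M \<rightarrow>\<^sub>t M' \<Longrightarrow> Quo a M \<rightarrow>\<^sub>t Quo a M'"
| unqC:   "M \<rightarrow>\<^sub>t M' \<Longrightarrow> Unq a M \<rightarrow>\<^sub>t Unq a M'"
| tlam:   "M \<rightarrow>\<^sub>t M' \<Longrightarrow> TLam M \<rightarrow>\<^sub>t TLam M'"
| tapp:   "M \<rightarrow>\<^sub>t M' \<Longrightarrow> TApp M A \<rightarrow>\<^sub>t TApp M' A"

abbreviation reds :: "'b tm \<Rightarrow> 'b tm \<Rightarrow> bool" (infix "\<rightarrow>\<^sub>t\<^sup>*" 50) where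
  "M \<rightarrow>\<^sub>t\<^sup>* N \<equiv> red\<^sup>*\<^sup>* M N"

end

theory Submission imports Defs begin

abbreviation subs :: "nat \<Rightarrow> trans \<Rightarrow> trans \<Rightarrow> trans" where
  "subs k B A \<equiv> concat (map (substv k B) A)"

lemma liftv_liftv: "i \<le> k \<Longrightarrow> liftv (Suc k) (liftv i a) = liftv i (liftv k a)"
  by (simp add: liftv_def)
lemma liftv_substv: "j \<le> k \<Longrightarrow> map (liftv k) (substv j A a) = substv j (map (liftv k) A) (liftv (Suc k) a)"
  by (auto simp: liftv_def substv_def)
lemma liftv_substv_lt: "i \<le> j \<Longrightarrow> map (liftv i) (substv j B a) = substv (Suc j) (map (liftv i) B) (liftv i a)"
  by (auto simp: liftv_def substv_def)
lemma substv_liftv[simp]: "substv k B (liftv k a) = [a]"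
  by (auto simp: liftv_def substv_def)
lemma subs_liftv[simp]: "subs k B (map (liftv k) A) = A"
  by (induct A) auto
lemma subs_liftv_comp[simp]: "concat (map (substv k B \<circ> liftv k) A) = A"
  by (induct A) auto
lemma substv_substv: "j \<le> i \<Longrightarrow> subs i B (substv j A a) = subs j (subs i B A) (substv (Suc i) (map (liftv j) B) a)"
  by (auto simp: liftv_def substv_def)

lemma quoteT_append[simp]: "quoteT (A @ C) M = quoteT A (quoteT C M)"
  by (induct A) auto
lemma unquoteT_append[simp]: "unquoteT (A @ C) M = unquoteT C (unquoteT A M)"
  by (induct A arbitrary: M) auto
lemma tqs_append[simp]: "tqs (A @ C) t = tqs A (tqs C t)"
  by (induct A) auto

lemma liftTM_quoteT[simp]: "liftTM k (quoteT C M) = quoteT (map (liftv k) C) (liftTM k M)"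
  by (induct C) auto
lemma liftTM_unquoteT[simp]: "liftTM k (unquoteT C M) = unquoteT (map (liftv k) C) (liftTM k M)"
  by (induct C arbitrary: M) auto
lemma liftTy_tqs[simp]: "liftTy k (tqs C t) = tqs (map (liftv k) C) (liftTy k t)"
  by (induct C) auto
lemma liftM_quoteT[simp]: "liftM k (quoteT C M) = quoteT C (liftM k M)"
  by (induct C) auto
lemma liftM_unquoteT[simp]: "liftM k (unquoteT C M) = unquoteT C (liftM k M)"
  by (induct C arbitrary: M) auto
lemma subst_quoteT[simp]: "subst k N (quoteT C M) = quoteT C (subst k N M)"
  by (induct C) auto
lemma subst_unquoteT[simp]: "subst k N (unquoteT C M) = unquoteT C (subst k N M)"
  by (induct C arbitrary: M) auto
lemma substTM_quoteT[simp]: "substTM k B (quoteT C M) = quoteT (subs k B C) (substTM k B M)"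
  by (induct C) auto
lemma substTM_unquoteT[simp]: "substTM k B (unquoteT C M) = unquoteT (subs k B C) (substTM k B M)"
  by (induct C arbitrary: M) auto
lemma substTy_tqs[simp]: "substTy k B (tqs C t) = tqs (subs k B C) (substTy k B t)"
  by (induct C) auto

lemma liftM_liftTM: "liftM i (liftTM j M) = liftTM j (liftM i M)"
  by (induct M arbitrary: i j) auto
lemma liftM_liftM: "i \<le> k \<Longrightarrow> liftM (Suc k) (liftM i M) = liftM i (liftM k M)"
  by (induct M arbitrary: i k) (auto simp: liftv_def)
lemma liftTy_liftTy: "i \<le> k \<Longrightarrow> liftTy (Suc k) (liftTy i t) = liftTy i (liftTy k t)"
  by (induct t arbitrary: i k) (auto simp: liftv_liftv)
lemma liftTM_liftTM: "i \<le> k \<Longrightarrow> liftTM (Suc k) (liftTM i M) = liftTM i (liftTM k M)"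
  by (induct M arbitrary: i k) (auto simp: liftv_liftv liftTy_liftTy)
lemma liftM_subst: "j \<le> i \<Longrightarrow> liftM i (subst j s t) = subst j (liftM i s) (liftM (Suc i) t)"
  by (induct t arbitrary: i j s) (auto simp: liftv_def liftM_liftM liftM_liftTM)
lemma liftM_subst_lt: "i \<le> j \<Longrightarrow> liftM i (subst j s t) = subst (Suc j) (liftM i s) (liftM i t)"
  by (induct t arbitrary: i j s) (auto simp: liftv_def liftM_liftM liftM_liftTM)
lemma subst_liftM[simp]: "subst k s (liftM k t) = t"
  by (induct t arbitrary: k s) (auto simp: liftv_def)
lemma liftTM_subst: "liftTM k (subst j s t) = subst j (liftTM k s) (liftTM k t)"
  by (induct t arbitrary: k j s) (auto simp: liftM_liftTM liftTM_liftTM)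
lemma subst_subst: "i \<le> j \<Longrightarrow> subst i (subst j v u) (subst (Suc j) (liftM i v) t) = subst j v (subst i u t)"
proof (induct t arbitrary: i j u v)
  case (Lam x1 t)
  have e1: "subst (Suc j) (liftM 0 v) (liftM 0 u) = liftM 0 (subst j v u)"
    by (simp add: liftM_subst_lt)
  have e2: "liftM 0 (liftM i v) = liftM (Suc i) (liftM 0 v)"
    by (simp add: liftM_liftM)
  show ?case using Lam(1)[of "Suc i" "Suc j" "liftM 0 v" "liftM 0 u"] Lam(2)
    by (simp add: e1 e2)
next
  case (TLam t)
  have e1: "subst j (liftTM 0 v) (liftTM 0 u) = liftTM 0 (subst j v u)"
    by (simp add: liftTM_subst)
  have e2: "liftTM 0 (liftM i v) = liftM i (liftTM 0 v)"
    by (simp add: liftM_liftTM)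
  show ?case using TLam(1)[of i j "liftTM 0 v" "liftTM 0 u"] TLam(2)
    by (simp add: e1 e2)
qed (auto simp: liftv_def)

lemma liftv_comp: "i \<le> k \<Longrightarrow> liftv (Suc k) \<circ> liftv i = liftv i \<circ> liftv k"
  by (rule ext) (simp add: liftv_def)
lemma map_liftv_substv: "j \<le> k \<Longrightarrow> map (liftv k) \<circ> substv j A = substv j (map (liftv k) A) \<circ> liftv (Suc k)"
  by (rule ext) (simp add: liftv_substv)
lemma map_liftv_substv_lt: "i \<le> j \<Longrightarrow> map (liftv i) \<circ> substv j B = substv (Suc j) (map (liftv i) B) \<circ> liftv i"
  by (rule ext) (simp add: liftv_substv_lt)

lemma liftM_substTM: "liftM i (substTM j A t) = substTM j A (liftM i t)"
  by (induct t arbitrary: i j A) auto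
lemma liftTy_substTy: "j \<le> k \<Longrightarrow> liftTy k (substTy j A t) = substTy j (map (liftv k) A) (liftTy (Suc k) t)"
  by (induct t arbitrary: j k A) (auto simp: liftv_substv liftv_liftv liftv_comp)
lemma liftTM_substTM: "j \<le> k \<Longrightarrow> liftTM k (substTM j A t) = substTM j (map (liftv k) A) (liftTM (Suc k) t)"
  by (induct t arbitrary: j k A) (auto simp: liftv_substv liftv_liftv liftTy_substTy map_concat liftv_comp map_liftv_substv)
lemma liftTy_substTy_lt: "i \<le> j \<Longrightarrow> liftTy i (substTy j B t) = substTy (Suc j) (map (liftv i) B) (liftTy i t)"
  by (induct t arbitrary: i j B) (auto simp: liftv_substv_lt liftv_liftv liftv_comp)
lemma liftTM_substTM_lt: "i \<le> j \<Longrightarrow> liftTM i (substTM j B t) = substTM (Suc j) (map (liftv i) B) (liftTM i t)"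
  by (induct t arbitrary: i j B) (auto simp: liftv_substv_lt liftv_liftv liftTy_substTy_lt map_concat liftv_comp map_liftv_substv_lt)
lemma substTy_liftTy[simp]: "substTy k B (liftTy k t) = t"
  by (induct t arbitrary: k B) auto
lemma substTM_liftTM[simp]: "substTM k B (liftTM k t) = t"
  by (induct t arbitrary: k B) auto
lemma subst_substTM: "subst k Q (substTM j A M) = substTM j A (subst k (liftTM j Q) M)"
  by (induct M arbitrary: k Q j A) (auto simp: liftM_liftTM liftTM_liftTM)
lemma substTM_subst: "substTM k B (subst j N M) = subst j (substTM k B N) (substTM k B M)"
  by (induct M arbitrary: k B j N) (auto simp: liftM_substTM liftTM_substTM_lt)
lemma substv_liftv0_comp: "substv (Suc i) (map (liftv 0) B) \<circ> liftv 0 = map (liftv 0) \<circ> substv i B"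
  by (rule ext) (simp add: liftv_substv_lt)
lemma subs_subs: "j \<le> i \<Longrightarrow> subs i B (subs j A xs) = subs j (subs i B A) (subs (Suc i) (map (liftv j) B) xs)"
  by (induct xs) (simp_all add: substv_substv)
lemma substTy_substTy: "j \<le> i \<Longrightarrow> substTy i B (substTy j A t) = substTy j (subs i B A) (substTy (Suc i) (map (liftv j) B) t)"
  by (induct t arbitrary: i j A B) (auto simp: substv_substv liftv_comp substv_liftv0_comp map_concat)
lemma substTM_substTM: "j \<le> i \<Longrightarrow> substTM i B (substTM j A t) = substTM j (subs i B A) (substTM (Suc i) (map (liftv j) B) t)"
proof (induct t arbitrary: i j A B)
  case (TApp t x)
  then show ?case using subs_subs[of j i B A x] by simp
qed (auto simp: substv_substv liftv_comp substv_liftv0_comp map_concat substTy_substTy)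


inductive pb :: "'b tm \<Rightarrow> 'b tm \<Rightarrow> bool" where
  pb_var: "pb (Var i) (Var i)"
| pb_app: "pb M M' \<Longrightarrow> pb N N' \<Longrightarrow> pb (App M N) (App M' N')"
| pb_lam: "pb M M' \<Longrightarrow> pb (Lam t M) (Lam t M')"
| pb_quo: "pb M M' \<Longrightarrow> pb (Quo a M) (Quo a M')"
| pb_unq: "pb M M' \<Longrightarrow> pb (Unq a M) (Unq a M')"
| pb_tlam: "pb M M' \<Longrightarrow> pb (TLam M) (TLam M')"
| pb_tapp: "pb M M' \<Longrightarrow> pb (TApp M A) (TApp M' A)"
| pb_beta: "pb M M' \<Longrightarrow> pb N N' \<Longrightarrow> pb (App (Lam t M) N) (subst 0 N' M')"
| pb_tbeta: "pb M M' \<Longrightarrow> pb (TApp (TLam M) A) (substTM 0 A M')"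

inductive pq :: "'b tm \<Rightarrow> 'b tm \<Rightarrow> bool" where
  pq_var: "pq (Var i) (Var i)"
| pq_app: "pq M M' \<Longrightarrow> pq N N' \<Longrightarrow> pq (App M N) (App M' N')"
| pq_lam: "pq M M' \<Longrightarrow> pq (Lam t M) (Lam t M')"
| pq_quo: "pq M M' \<Longrightarrow> pq (Quo a M) (Quo a M')"
| pq_unq: "pq M M' \<Longrightarrow> pq (Unq a M) (Unq a M')"
| pq_tlam: "pq M M' \<Longrightarrow> pq (TLam M) (TLam M')"
| pq_tapp: "pq M M' \<Longrightarrow> pq (TApp M A) (TApp M' A)"
| pq_red: "pq M M' \<Longrightarrow> pq (Unq a (Quo a M)) M'"

inductive_cases pbE_var: "pb (Var i) N"
inductive_cases pbE_lam: "pb (Lam t M) N"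
inductive_cases pbE_quo: "pb (Quo a M) N"
inductive_cases pbE_tlam: "pb (TLam M) N"
inductive_cases pbE_app: "pb (App M P) N"
inductive_cases pbE_tapp: "pb (TApp M A) N"
inductive_cases pbE_unq: "pb (Unq a M) N"

inductive_cases pqE_var: "pq (Var i) N"
inductive_cases pqE_lam: "pq (Lam t M) N"
inductive_cases pqE_quo: "pq (Quo a M) N"
inductive_cases pqE_tlam: "pq (TLam M) N"
inductive_cases pqE_app: "pq (App M P) N"
inductive_cases pqE_tapp: "pq (TApp M A) N"
inductive_cases pqE_unq: "pq (Unq a M) N"

lemma pb_refl[simp, intro]: "pb M M"
  by (induct M) (auto intro: pb.intros)
lemma pq_refl[simp, intro]: "pq M M"
  by (induct M) (auto intro: pq.intros)

lemma pb_quoteT: "pb M M' \<Longrightarrow> pb (quoteT C M) (quoteT C M')"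
  by (induct C) (auto intro: pb.intros)
lemma pb_unquoteT: "pb M M' \<Longrightarrow> pb (unquoteT C M) (unquoteT C M')"
  by (induct C arbitrary: M M') (auto intro: pb.intros)

lemma pb_liftM: "pb M M' \<Longrightarrow> pb (liftM k M) (liftM k M')"
proof (induct arbitrary: k rule: pb.induct)
  case (pb_beta M M' N N' t)
  then show ?case by (simp add: liftM_subst pb.pb_beta)
next
  case (pb_tbeta M M' A)
  then show ?case by (simp add: liftM_substTM pb.pb_tbeta)
qed (auto intro: pb.intros)

lemma pb_liftTM: "pb M M' \<Longrightarrow> pb (liftTM k M) (liftTM k M')"
proof (induct arbitrary: k rule: pb.induct)
  case (pb_beta M M' N N' t)
  then show ?case by (simp add: liftTM_subst pb.pb_beta)
next
  case (pb_tbeta M M' A)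
  then show ?case by (simp add: liftTM_substTM pb.pb_tbeta)
qed (auto intro: pb.intros)

lemma pb_subst: "pb M M' \<Longrightarrow> pb N N' \<Longrightarrow> pb (subst k N M) (subst k N' M')"
proof (induct arbitrary: k N N' rule: pb.induct)
  case (pb_beta M M' P P' t)
  have "pb (App (Lam t (subst (Suc k) (liftM 0 N) M)) (subst k N P))
          (subst 0 (subst k N' P') (subst (Suc k) (liftM 0 N') M'))"
    using pb_beta by (intro pb.pb_beta) (auto intro: pb_liftM)
  then show ?case using subst_subst[of 0 k N' P' M'] by simp
next
  case (pb_tbeta M M' A)
  then show ?case by (simp add: subst_substTM pb.pb_tbeta pb_liftTM)
next
  case (pb_lam M M' t)
  then show ?case by (simp add: pb.pb_lam pb_liftM)
next
  case (pb_tlam M M')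
  then show ?case by (simp add: pb.pb_tlam pb_liftTM)
qed (auto intro: pb.intros)

lemma pb_substTM: "pb M M' \<Longrightarrow> pb (substTM k B M) (substTM k B M')"
proof (induct arbitrary: k B rule: pb.induct)
  case (pb_beta M M' N N' t)
  then show ?case by (simp add: substTM_subst pb.pb_beta)
next
  case (pb_tbeta M M' A)
  then show ?case by (simp add: substTM_substTM pb.pb_tbeta)
qed (auto intro: pb.intros pb_quoteT pb_unquoteT)

fun devb :: "'b tm \<Rightarrow> 'b tm" where
  "devb (Var i) = Var i"
| "devb (App (Lam t M) N) = subst 0 (devb N) (devb M)"
| "devb (App M N) = App (devb M) (devb N)"
| "devb (Lam t M) = Lam t (devb M)"
| "devb (Quo a M) = Quo a (devb M)"
| "devb (Unq a M) = Unq a (devb M)"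
| "devb (TLam M) = TLam (devb M)"
| "devb (TApp (TLam M) A) = substTM 0 A (devb M)"
| "devb (TApp M A) = TApp (devb M) A"

lemma pb_devb: "pb M N \<Longrightarrow> pb N (devb M)"
proof (induct rule: pb.induct)
  case (pb_app M M' N N')
  show ?case
  proof (cases "\<exists>t P. M = Lam t P")
    case True
    then obtain t P where M: "M = Lam t P" by blast
    from pb_app(1) M obtain P' where M': "M' = Lam t P'" and "pb P P'"
      by (auto elim: pbE_lam)
    from pb_app(2) M M' have "pb P' (devb P)" by (auto elim: pbE_lam)
    then show ?thesis using M M' pb_app by (auto intro: pb.intros)
  next
    case False
    then have "devb (App M N) = App (devb M) (devb N)" by (cases M) auto
    then show ?thesis using pb_app by (auto intro: pb.intros)
  qed
next
  case (pb_tapp M M' A)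
  show ?case
  proof (cases "\<exists>P. M = TLam P")
    case True
    then obtain P where M: "M = TLam P" by blast
    from pb_tapp(1) M obtain P' where M': "M' = TLam P'" and "pb P P'"
      by (auto elim: pbE_tlam)
    from pb_tapp(2) M M' have "pb P' (devb P)" by (auto elim: pbE_tlam)
    then show ?thesis using M M' pb_tapp by (auto intro: pb.intros)
  next
    case False
    then have "devb (TApp M A) = TApp (devb M) A" by (cases M) auto
    then show ?thesis using pb_tapp by (auto intro: pb.intros)
  qed
next
  case (pb_beta M M' N N' t)
  then show ?case by (simp add: pb_subst)
next
  case (pb_tbeta M M' A)
  then show ?case by (simp add: pb_substTM)
qed (auto intro: pb.intros)

lemma pb_diamond: "pb M N1 \<Longrightarrow> pb M N2 \<Longrightarrow> \<exists>N. pb N1 N \<and> pb N2 N"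
  using pb_devb by blast


abbreviation pqs where "pqs \<equiv> pq\<^sup>*\<^sup>*"
abbreviation pbs where "pbs \<equiv> pb\<^sup>*\<^sup>*"

lemma pq_liftM: "pq M M' \<Longrightarrow> pq (liftM k M) (liftM k M')"
  by (induct arbitrary: k rule: pq.induct) (auto intro: pq.intros)
lemma pq_liftTM: "pq M M' \<Longrightarrow> pq (liftTM k M) (liftTM k M')"
  by (induct arbitrary: k rule: pq.induct) (auto intro: pq.intros)
lemma pq_subst: "pq M M' \<Longrightarrow> pq N N' \<Longrightarrow> pq (subst k N M) (subst k N' M')"
proof (induct arbitrary: k N N' rule: pq.induct)
  case (pq_lam M M' t)
  then show ?case by (simp add: pq.pq_lam pq_liftM)
next
  case (pq_tlam M M')
  then show ?case by (simp add: pq.pq_tlam pq_liftTM)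
qed (auto intro: pq.intros)

lemma star_cong:
  assumes "\<And>x y. R x y \<Longrightarrow> R (f x) (f y)"
  shows "R\<^sup>*\<^sup>* x y \<Longrightarrow> R\<^sup>*\<^sup>* (f x) (f y)"
  by (induct rule: rtranclp_induct) (auto intro: rtranclp.rtrancl_into_rtrancl assms)

lemma pqs_app: "pqs M M' \<Longrightarrow> pqs N N' \<Longrightarrow> pqs (App M N) (App M' N')"
proof -
  assume a: "pqs M M'" "pqs N N'"
  have "pqs (App M N) (App M' N)"
    using star_cong[of pq "\<lambda>x. App x N"] a(1) by (auto intro: pq.intros)
  moreover have "pqs (App M' N) (App M' N')"
    using star_cong[of pq "\<lambda>x. App M' x"] a(2) by (auto intro: pq.intros)
  ultimately show ?thesis by simp
qed
lemma pqs_lam: "pqs M M' \<Longrightarrow> pqs (Lam t M) (Lam t M')"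
  by (erule star_cong[where f="Lam t" and R=pq, rotated]) (rule pq.pq_lam)
lemma pqs_quo: "pqs M M' \<Longrightarrow> pqs (Quo a M) (Quo a M')"
  by (erule star_cong[where f="Quo a" and R=pq, rotated]) (rule pq.pq_quo)
lemma pqs_unq: "pqs M M' \<Longrightarrow> pqs (Unq a M) (Unq a M')"
  by (erule star_cong[where f="Unq a" and R=pq, rotated]) (rule pq.pq_unq)
lemma pqs_tlam: "pqs M M' \<Longrightarrow> pqs (TLam M) (TLam M')"
  by (erule star_cong[where f="TLam" and R=pq, rotated]) (rule pq.pq_tlam)
lemma pqs_tapp: "pqs M M' \<Longrightarrow> pqs (TApp M A) (TApp M' A)"
  by (erule star_cong[where f="\<lambda>x. TApp x A" and R=pq, rotated]) (rule pq.pq_tapp)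
lemma pqs_quoteT: "pqs M M' \<Longrightarrow> pqs (quoteT C M) (quoteT C M')"
  by (induct C) (auto intro: pqs_quo)
lemma pqs_unquoteT: "pqs M M' \<Longrightarrow> pqs (unquoteT C M) (unquoteT C M')"
  by (induct C arbitrary: M M') (auto intro: pqs_unq)

lemma pqs_subst: "pqs M M' \<Longrightarrow> pqs N N' \<Longrightarrow> pqs (subst k N M) (subst k N' M')"
proof -
  assume a: "pqs M M'" "pqs N N'"
  have "pqs (subst k N M) (subst k N M')"
    using star_cong[of pq "subst k N"] a(1) pq_subst by blast
  moreover have "pqs (subst k N M') (subst k N' M')"
    using star_cong[of pq "\<lambda>x. subst k x M'"] a(2) pq_subst by blast
  ultimately show ?thesis by simp
qed

lemma unq_quo_pqs: "pqs (unquoteT C (quoteT C X)) X"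
proof (induct C arbitrary: X)
  case Nil
  then show ?case by simp
next
  case (Cons c C)
  have "pqs (unquoteT C (Unq c (Quo c (quoteT C X)))) (unquoteT C (quoteT C X))"
    by (rule pqs_unquoteT) (auto intro: pq.intros)
  then show ?case using Cons[of X] by (simp add: rtranclp_trans[of pq _ "unquoteT C (quoteT C X)"])
qed

lemma pq_substTM: "pq M M' \<Longrightarrow> pqs (substTM k B M) (substTM k B M')"
proof (induct arbitrary: k B rule: pq.induct)
  case (pq_red M M' a)
  have "pqs (substTM k B (Unq a (Quo a M))) (substTM k B M)"
    using unq_quo_pqs by simp
  then show ?case using pq_red(2)[of k B] rtranclp_trans[of pq] by blast
qed (auto intro: pqs_app pqs_lam pqs_quoteT pqs_unquoteT pqs_tlam pqs_tapp)

lemma pqs_substTM: "pqs M M' \<Longrightarrow> pqs (substTM k B M) (substTM k B M')"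
proof (induct rule: rtranclp_induct)
  case (step y z)
  then show ?case using pq_substTM[OF step(2), of k B] rtranclp_trans[of pq] by blast
qed simp

lemma pqs_quoE: "pqs (Quo a X) Y \<Longrightarrow> \<exists>Z. Y = Quo a Z \<and> pqs X Z"
  by (induct rule: rtranclp_induct) (auto elim: pqE_quo intro: rtranclp.rtrancl_into_rtrancl)

fun devq :: "'b tm \<Rightarrow> 'b tm" where
  "devq (Var i) = Var i"
| "devq (App M N) = App (devq M) (devq N)"
| "devq (Lam t M) = Lam t (devq M)"
| "devq (Quo a M) = Quo a (devq M)"
| "devq (Unq a (Quo b M)) = (if a = b then devq M else Unq a (Quo b (devq M)))"
| "devq (Unq a M) = Unq a (devq M)"
| "devq (TLam M) = TLam (devq M)"
| "devq (TApp M A) = TApp (devq M) A"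

lemma pq_devq: "pq M N \<Longrightarrow> pq N (devq M)"
proof (induct rule: pq.induct)
  case (pq_unq M M' a)
  show ?case
  proof (cases "\<exists>b P. M = Quo b P")
    case True
    then obtain b P where M: "M = Quo b P" by blast
    from pq_unq(1) M obtain P' where M': "M' = Quo b P'" by (auto elim: pqE_quo)
    from pq_unq(2) M M' have "pq P' (devq P)" by (auto elim: pqE_quo)
    then show ?thesis using M M' by (auto intro: pq.intros)
  next
    case False
    then have "devq (Unq a M) = Unq a (devq M)" by (cases M) auto
    then show ?thesis using pq_unq by (auto intro: pq.intros)
  qed
qed (auto intro: pq.intros)

lemma pq_diamond: "pq M N1 \<Longrightarrow> pq M N2 \<Longrightarrow> \<exists>N. pq N1 N \<and> pq N2 N"
  using pq_devq by blast

lemma comm1: "pb M N2 \<Longrightarrow> pq M N1 \<Longrightarrow> \<exists>N. pb N1 N \<and> pqs N2 N"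
proof (induct arbitrary: N1 rule: pb.induct)
  case (pb_var i)
  then show ?case by (auto elim: pqE_var)
next
  case (pb_app M M' N N')
  from pb_app(5) obtain M1 N1' where "N1 = App M1 N1'" "pq M M1" "pq N N1'" by (auto elim: pqE_app)
  then show ?case using pb_app by (blast intro: pb.intros pqs_app)
next
  case (pb_lam M M' t)
  then show ?case by (blast elim: pqE_lam intro: pb.intros pqs_lam)
next
  case (pb_quo M M' a)
  then show ?case by (blast elim: pqE_quo intro: pb.intros pqs_quo)
next
  case (pb_tlam M M')
  then show ?case by (blast elim: pqE_tlam intro: pb.intros pqs_tlam)
next
  case (pb_tapp M M' A)
  then show ?case by (blast elim: pqE_tapp intro: pb.intros pqs_tapp)
next
  case (pb_unq X X' a)
  from pb_unq(3) consider (c) X1 where "N1 = Unq a X1" "pq X X1"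
    | (r) P where "X = Quo a P" "pq P N1" by (auto elim: pqE_unq)
  then show ?case
  proof cases
    case c
    then show ?thesis using pb_unq by (blast intro: pb.intros pqs_unq)
  next
    case r
    then have X: "X = Quo a P" and P: "pq P N1" by auto
    from pb_unq(1) X obtain P'' where X': "X' = Quo a P''" by (auto elim: pbE_quo)
    from pb_unq(2)[of "Quo a N1"] X P obtain N where "pb (Quo a N1) N" "pqs X' N"
      by (auto intro: pq.intros)
    then obtain R where R: "N = Quo a R" "pb N1 R" "pqs X' (Quo a R)" by (auto elim: pbE_quo)
    from R(3) X' have "pqs P'' R" using pqs_quoE by fastforce
    moreover have "pq (Unq a (Quo a P'')) P''" by (auto intro: pq.intros)
    ultimately have "pqs (Unq a X') R" using X' by (simp add: converse_rtranclp_into_rtranclp)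
    then show ?thesis using R by blast
  qed
next
  case (pb_beta M M' N N' t)
  from pb_beta(5) obtain L1 N1' where e: "N1 = App L1 N1'" "pq (Lam t M) L1" "pq N N1'"
    by (auto elim: pqE_app)
  from e(2) obtain M1 where "L1 = Lam t M1" "pq M M1" by (auto elim: pqE_lam)
  with e pb_beta obtain M'' N'' where "pb M1 M''" "pqs M' M''" "pb N1' N''" "pqs N' N''"
    by meson
  then show ?case using e \<open>L1 = Lam t M1\<close>
    by (blast intro: pb.intros pqs_subst)
next
  case (pb_tbeta M M' A)
  from pb_tbeta(3) obtain L1 where e: "N1 = TApp L1 A" "pq (TLam M) L1"
    by (auto elim: pqE_tapp)
  from e(2) obtain M1 where "L1 = TLam M1" "pq M M1" by (auto elim: pqE_tlam)
  with pb_tbeta obtain M'' where "pb M1 M''" "pqs M' M''" by meson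
  then show ?case using e \<open>L1 = TLam M1\<close>
    by (blast intro: pb.intros pqs_substTM)
qed

lemma comm2: "pqs M N1 \<Longrightarrow> pb M N2 \<Longrightarrow> \<exists>N. pb N1 N \<and> pqs N2 N"
proof (induct arbitrary: N2 rule: rtranclp_induct)
  case base
  then show ?case by blast
next
  case (step y z)
  then obtain N where "pb y N" "pqs N2 N" by blast
  with step(2) comm1 obtain N' where "pb z N'" "pqs N N'" by blast
  then show ?case using \<open>pqs N2 N\<close> by (meson rtranclp_trans)
qed

lemma comm3: "pbs M N2 \<Longrightarrow> pqs M N1 \<Longrightarrow> \<exists>N. pbs N1 N \<and> pqs N2 N"
proof (induct arbitrary: N1 rule: rtranclp_induct)
  case base
  then show ?case by blast
next
  case (step y z)
  then obtain N where "pbs N1 N" "pqs y N" by blast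
  with step(2) comm2 obtain N' where "pb N N'" "pqs z N'" by blast
  then show ?case using \<open>pbs N1 N\<close> by (meson rtranclp.rtrancl_into_rtrancl)
qed

lemma diamond_strip:
  assumes d: "\<forall>x y z. R x y \<longrightarrow> R x z \<longrightarrow> (\<exists>u. R y u \<and> R z u)"
  shows "R\<^sup>*\<^sup>* x z \<Longrightarrow> R x y \<Longrightarrow> \<exists>u. R\<^sup>*\<^sup>* y u \<and> R z u"
proof (induct arbitrary: y rule: rtranclp_induct)
  case base
  then show ?case by blast
next
  case (step w z)
  from step(3)[OF step(4)] obtain u where u: "R\<^sup>*\<^sup>* y u" "R w u" by blast
  from d[rule_format, OF step(2) u(2)] obtain v where v: "R z v" "R u v" by blast
  have "R\<^sup>*\<^sup>* y v" by (rule rtranclp.rtrancl_into_rtrancl[OF u(1) v(2)])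
  then show ?case using v(1) by blast
qed

lemma diamond_conf:
  assumes d: "\<forall>x y z. R x y \<longrightarrow> R x z \<longrightarrow> (\<exists>u. R y u \<and> R z u)"
  shows "R\<^sup>*\<^sup>* x y \<Longrightarrow> R\<^sup>*\<^sup>* x z \<Longrightarrow> \<exists>u. R\<^sup>*\<^sup>* y u \<and> R\<^sup>*\<^sup>* z u"
proof (induct arbitrary: z rule: rtranclp_induct)
  case base
  then show ?case by blast
next
  case (step w y)
  from step(3)[OF step(4)] obtain u where u: "R\<^sup>*\<^sup>* w u" "R\<^sup>*\<^sup>* z u" by blast
  from diamond_strip[where R=R, OF d, OF u(1) step(2)] obtain v where v: "R\<^sup>*\<^sup>* y v" "R u v" by blast
  have "R\<^sup>*\<^sup>* z v" by (rule rtranclp.rtrancl_into_rtrancl[OF u(2) v(2)])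
  then show ?case using v(1) by blast
qed

definition S :: "'b tm \<Rightarrow> 'b tm \<Rightarrow> bool" where
  "S M N = (\<exists>X. pqs M X \<and> pbs X N)"

lemma S_diamond: "S M N1 \<Longrightarrow> S M N2 \<Longrightarrow> \<exists>N. S N1 N \<and> S N2 N"
proof -
  assume "S M N1" "S M N2"
  then obtain X1 X2 where x: "pqs M X1" "pbs X1 N1" "pqs M X2" "pbs X2 N2"
    unfolding S_def by blast
  have dq: "\<forall>x y z. pq x y \<longrightarrow> pq x z \<longrightarrow> (\<exists>u. pq y u \<and> pq z u)"
    by (intro allI impI, rule pq_diamond)
  have db: "\<forall>x y z. pb x y \<longrightarrow> pb x z \<longrightarrow> (\<exists>u. pb y u \<and> pb z u)"
    by (intro allI impI, rule pb_diamond)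
  from diamond_conf[where R=pq, OF dq, OF x(1,3)] obtain Y where y: "pqs X1 Y" "pqs X2 Y" by blast
  from comm3[OF x(2) y(1)] obtain Z1 where z1: "pbs Y Z1" "pqs N1 Z1" by blast
  from comm3[OF x(4) y(2)] obtain Z2 where z2: "pbs Y Z2" "pqs N2 Z2" by blast
  from diamond_conf[where R=pb, OF db, OF z1(1) z2(1)] obtain W where "pbs Z1 W" "pbs Z2 W" by blast
  then have "S N1 W" "S N2 W" using z1 z2 unfolding S_def by auto
  then show ?thesis by blast
qed

lemma red_star_cong:
  assumes "\<And>x y. red x y \<Longrightarrow> red (f x) (f y)"
  shows "red\<^sup>*\<^sup>* x y \<Longrightarrow> red\<^sup>*\<^sup>* (f x) (f y)"
  by (induct rule: rtranclp_induct) (auto intro: rtranclp.rtrancl_into_rtrancl assms)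

lemma reds_app: "red\<^sup>*\<^sup>* M M' \<Longrightarrow> red\<^sup>*\<^sup>* N N' \<Longrightarrow> red\<^sup>*\<^sup>* (App M N) (App M' N')"
proof -
  assume a: "red\<^sup>*\<^sup>* M M'" "red\<^sup>*\<^sup>* N N'"
  have "red\<^sup>*\<^sup>* (App M N) (App M' N)"
    using red_star_cong[of "\<lambda>x. App x N"] a(1) by (auto intro: red.intros)
  moreover have "red\<^sup>*\<^sup>* (App M' N) (App M' N')"
    using red_star_cong[of "\<lambda>x. App M' x"] a(2) by (auto intro: red.intros)
  ultimately show ?thesis by simp
qed
lemma reds_lam: "red\<^sup>*\<^sup>* M M' \<Longrightarrow> red\<^sup>*\<^sup>* (Lam t M) (Lam t M')"
  by (erule red_star_cong[where f="Lam t", rotated]) (rule red.lam)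
lemma reds_quo: "red\<^sup>*\<^sup>* M M' \<Longrightarrow> red\<^sup>*\<^sup>* (Quo a M) (Quo a M')"
  by (erule red_star_cong[where f="Quo a", rotated]) (rule red.quoC)
lemma reds_unq: "red\<^sup>*\<^sup>* M M' \<Longrightarrow> red\<^sup>*\<^sup>* (Unq a M) (Unq a M')"
  by (erule red_star_cong[where f="Unq a", rotated]) (rule red.unqC)
lemma reds_tlam: "red\<^sup>*\<^sup>* M M' \<Longrightarrow> red\<^sup>*\<^sup>* (TLam M) (TLam M')"
  by (erule red_star_cong[where f="TLam", rotated]) (rule red.tlam)
lemma reds_tapp: "red\<^sup>*\<^sup>* M M' \<Longrightarrow> red\<^sup>*\<^sup>* (TApp M A) (TApp M' A)"
  by (erule red_star_cong[where f="\<lambda>x. TApp x A", rotated]) (rule red.tapp)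

lemma pb_reds: "pb M N \<Longrightarrow> red\<^sup>*\<^sup>* M N"
proof (induct rule: pb.induct)
  case (pb_beta M M' N N' t)
  have "red\<^sup>*\<^sup>* (App (Lam t M) N) (App (Lam t M') N')"
    using pb_beta by (auto intro: reds_app reds_lam)
  then show ?case by (auto intro: rtranclp.rtrancl_into_rtrancl red.beta)
next
  case (pb_tbeta M M' A)
  have "red\<^sup>*\<^sup>* (TApp (TLam M) A) (TApp (TLam M') A)"
    using pb_tbeta by (auto intro: reds_tapp reds_tlam)
  then show ?case by (auto intro: rtranclp.rtrancl_into_rtrancl red.tbeta)
qed (auto intro: reds_app reds_lam reds_quo reds_unq reds_tlam reds_tapp)

lemma pq_reds: "pq M N \<Longrightarrow> red\<^sup>*\<^sup>* M N"
proof (induct rule: pq.induct)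
  case (pq_red M M' a)
  have "red (Unq a (Quo a M)) M" by (rule red.quo)
  then show ?case using pq_red by (auto intro: converse_rtranclp_into_rtranclp)
qed (auto intro: reds_app reds_lam reds_quo reds_unq reds_tlam reds_tapp)

lemma red_pq_pb: "red M N \<Longrightarrow> pq M N \<or> pb M N"
  by (induct rule: red.induct) (auto intro: pq.intros pb.intros)

lemma red_S: "red M N \<Longrightarrow> S M N"
  unfolding S_def using red_pq_pb by blast

lemma S_reds: "S M N \<Longrightarrow> red\<^sup>*\<^sup>* M N"
proof -
  assume "S M N"
  then obtain X where x1: "pqs M X" and x2: "pbs X N" unfolding S_def by blast
  have h1: "pqs M X \<Longrightarrow> red\<^sup>*\<^sup>* M X"
  proof (induct rule: rtranclp_induct)
    case (step y z)
    show ?case by (rule rtranclp_trans[OF step(3) pq_reds[OF step(2)]])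
  qed simp
  have h2: "pbs X N \<Longrightarrow> red\<^sup>*\<^sup>* X N"
  proof (induct rule: rtranclp_induct)
    case (step y z)
    show ?case by (rule rtranclp_trans[OF step(3) pb_reds[OF step(2)]])
  qed simp
  show ?thesis by (rule rtranclp_trans[OF h1[OF x1] h2[OF x2]])
qed

lemma reds_Ss: "red\<^sup>*\<^sup>* M N \<Longrightarrow> S\<^sup>*\<^sup>* M N"
proof (induct rule: rtranclp_induct)
  case (step y z)
  show ?case by (rule rtranclp.rtrancl_into_rtrancl[OF step(3) red_S[OF step(2)]])
qed simp

lemma Ss_reds: "S\<^sup>*\<^sup>* M N \<Longrightarrow> red\<^sup>*\<^sup>* M N"
proof (induct rule: rtranclp_induct)
  case (step y z)
  show ?case by (rule rtranclp_trans[OF step(3) S_reds[OF step(2)]])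
qed simp

theorem mainTheorem7:
  fixes M N1 N2 :: "'b tm"
  assumes "M \<rightarrow>\<^sub>t\<^sup>* N1" and "M \<rightarrow>\<^sub>t\<^sup>* N2"
  shows "\<exists>N. N1 \<rightarrow>\<^sub>t\<^sup>* N \<and> N2 \<rightarrow>\<^sub>t\<^sup>* N"
proof -
  have d: "\<forall>x y z. S x y \<longrightarrow> S x z \<longrightarrow> (\<exists>u. S y u \<and> S z u)"
    by (intro allI impI, rule S_diamond)
  from diamond_conf[where R=S, OF d, OF reds_Ss[OF assms(1)] reds_Ss[OF assms(2)]]
  obtain N where "S\<^sup>*\<^sup>* N1 N" "S\<^sup>*\<^sup>* N2 N" by blast
  then show ?thesis using Ss_reds by blast
qed

end
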